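(* Let $G$ and $H$ be finite simple graphs, neither of which is complete. Then for all vertices $(g,h),(g',h')$ of $G\diamond H$, either $d_{G\diamond H}((g,h),(g',h'))\le 3$ or $d_{G\diamond H}((g,h),(g',h'))=\infty$; moreover the latter can happen only when both $G$ and $H$ are disjoint unions of two complete graphs.
   Context: The modular product $G\diamond H$ has vertex set $V(G)\times V(H)$; distinct vertices $(g,h)$ and $(g',h')$ are adjacent iff ($g=g'$ and $hh'\in E(H)$), or ($gg'\in E(G)$ and $h=h'$), or ($gg'\in E(G)$ and $hh'\in E(H)$), or ($g\neq g'$, $h\neq h'$, $gg'\notin E(G)$ and $hh'\notin E(H)$). $d_X(u,v)$ is the usual graph distance, equal to $\infty$ if $u,v$ lie in different components. *)

theory Defs
  imports Main "HOL-Library.Extended_Nat"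
begin

definition simple_graph :: "'a set \<Rightarrow> ('a \<Rightarrow> 'a \<Rightarrow> bool) \<Rightarrow> bool" where
  "simple_graph V E \<longleftrightarrow> finite V \<and> (\<forall>x y. E x y \<longrightarrow> x \<in> V \<and> y \<in> V)
     \<and> (\<forall>x y. E x y \<longrightarrow> E y x) \<and> (\<forall>x. \<not> E x x)"

definition complete_graph :: "'a set \<Rightarrow> ('a \<Rightarrow> 'a \<Rightarrow> bool) \<Rightarrow> bool" where
  "complete_graph V E \<longleftrightarrow> (\<forall>x\<in>V. \<forall>y\<in>V. x \<noteq> y \<longrightarrow> E x y)"

definition two_cliques :: "'a set \<Rightarrow> ('a \<Rightarrow> 'a \<Rightarrow> bool) \<Rightarrow> bool" where
  "two_cliques V E \<longleftrightarrow> (\<exists>A B. A \<noteq> {} \<and> B \<noteq> {} \<and> A \<inter> B = {} \<and> V = A \<union> B \<and>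
     (\<forall>x\<in>V. \<forall>y\<in>V. E x y \<longleftrightarrow> (x \<noteq> y \<and> ((x \<in> A \<and> y \<in> A) \<or> (x \<in> B \<and> y \<in> B)))))"

definition modprod_adj :: "'a set \<Rightarrow> ('a \<Rightarrow> 'a \<Rightarrow> bool) \<Rightarrow> 'b set \<Rightarrow> ('b \<Rightarrow> 'b \<Rightarrow> bool)
    \<Rightarrow> 'a \<times> 'b \<Rightarrow> 'a \<times> 'b \<Rightarrow> bool" where
  "modprod_adj VG EG VH EH p q \<longleftrightarrow> (case p of (g, h) \<Rightarrow> case q of (g', h') \<Rightarrow>
     g \<in> VG \<and> g' \<in> VG \<and> h \<in> VH \<and> h' \<in> VH \<and> (g, h) \<noteq> (g', h') \<and>
     ((g = g' \<and> EH h h') \<or> (EG g g' \<and> h = h') \<or> (EG g g' \<and> EH h h') \<or>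
      (g \<noteq> g' \<and> h \<noteq> h' \<and> \<not> EG g g' \<and> \<not> EH h h')))"

definition modprod_verts :: "'a set \<Rightarrow> 'b set \<Rightarrow> ('a \<times> 'b) set" where
  "modprod_verts VG VH = VG \<times> VH"

definition gdist :: "('a \<Rightarrow> 'a \<Rightarrow> bool) \<Rightarrow> 'a \<Rightarrow> 'a \<Rightarrow> enat" where
  "gdist E u v = (if \<exists>n. (E ^^ n) u v then enat (LEAST n. (E ^^ n) u v) else \<infinity>)"

end

theory Submission
  imports Defs
begin

definition cl :: "'a set \<Rightarrow> ('a \<Rightarrow> 'a \<Rightarrow> bool) \<Rightarrow> 'a \<Rightarrow> 'a \<Rightarrow> bool" where
  "cl V E x y \<longleftrightarrow> x \<in> V \<and> y \<in> V \<and> (x = y \<or> E x y)"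
definition fr :: "'a set \<Rightarrow> ('a \<Rightarrow> 'a \<Rightarrow> bool) \<Rightarrow> 'a \<Rightarrow> 'a \<Rightarrow> bool" where
  "fr V E x y \<longleftrightarrow> x \<in> V \<and> y \<in> V \<and> x \<noteq> y \<and> \<not> E x y"
definition RR :: "'a set \<Rightarrow> ('a \<Rightarrow> 'a \<Rightarrow> bool) \<Rightarrow> 'b set \<Rightarrow> ('b \<Rightarrow> 'b \<Rightarrow> bool)
    \<Rightarrow> 'a \<times> 'b \<Rightarrow> 'a \<times> 'b \<Rightarrow> bool" where
  "RR VG EG VH EH p q \<longleftrightarrow> (cl VG EG (fst p) (fst q) \<and> cl VH EH (snd p) (snd q))
     \<or> (fr VG EG (fst p) (fst q) \<and> fr VH EH (snd p) (snd q))"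
definition cliq2 :: "'a set \<Rightarrow> ('a \<Rightarrow> 'a \<Rightarrow> bool) \<Rightarrow> 'a set \<Rightarrow> 'a set \<Rightarrow> bool" where
  "cliq2 V E A B \<longleftrightarrow> A \<noteq> {} \<and> B \<noteq> {} \<and> A \<inter> B = {} \<and> V = A \<union> B \<and>
     (\<forall>x\<in>V. \<forall>y\<in>V. E x y \<longleftrightarrow> (x \<noteq> y \<and> ((x \<in> A \<and> y \<in> A) \<or> (x \<in> B \<and> y \<in> B))))"

lemma two_cliques_iff: "two_cliques V E \<longleftrightarrow> (\<exists>A B. cliq2 V E A B)"
  by (simp add: two_cliques_def cliq2_def)

lemma RR_I1: "cl VG EG a a' \<Longrightarrow> cl VH EH b b' \<Longrightarrow> RR VG EG VH EH (a,b) (a',b')"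
  by (simp add: RR_def)
lemma RR_I2: "fr VG EG a a' \<Longrightarrow> fr VH EH b b' \<Longrightarrow> RR VG EG VH EH (a,b) (a',b')"
  by (simp add: RR_def)
lemma RR_swap: "RR VH EH VG EG p q \<Longrightarrow> RR VG EG VH EH (prod.swap p) (prod.swap q)"
  by (auto simp: RR_def)

lemma cl_sym: "simple_graph V E \<Longrightarrow> cl V E x y \<Longrightarrow> cl V E y x"
  by (auto simp: cl_def simple_graph_def)
lemma fr_sym: "simple_graph V E \<Longrightarrow> fr V E x y \<Longrightarrow> fr V E y x"
  by (auto simp: fr_def simple_graph_def)
lemma cl_refl: "x \<in> V \<Longrightarrow> cl V E x x" by (simp add: cl_def)
lemma cl_or_fr: "x \<in> V \<Longrightarrow> y \<in> V \<Longrightarrow> cl V E x y \<or> fr V E x y"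
  by (auto simp: cl_def fr_def)
lemma not_cl_fr: "cl V E x y \<Longrightarrow> fr V E x y \<Longrightarrow> False"
  by (auto simp: cl_def fr_def)
lemma E_cl: "simple_graph V E \<Longrightarrow> E x y \<Longrightarrow> cl V E x y"
  by (auto simp: cl_def simple_graph_def)
lemma cl_mem: "cl V E x y \<Longrightarrow> x \<in> V \<and> y \<in> V" by (simp add: cl_def)
lemma fr_mem: "fr V E x y \<Longrightarrow> x \<in> V \<and> y \<in> V" by (simp add: fr_def)

lemma RR_adj: "RR VG EG VH EH p q \<Longrightarrow> p = q \<or> modprod_adj VG EG VH EH p q"
  by (cases p; cases q) (auto simp: RR_def cl_def fr_def modprod_adj_def)

lemma walk3:
  assumes "RR VG EG VH EH u w1" "RR VG EG VH EH w1 w2" "RR VG EG VH EH w2 v"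
  shows "gdist (modprod_adj VG EG VH EH) u v \<le> 3"
proof -
  let ?E = "modprod_adj VG EG VH EH"
  have step: "\<exists>m\<le>Suc n. (?E^^m) x z" if a: "(?E^^n) x y" and b: "RR VG EG VH EH y z" for n x y z
    using RR_adj[OF b] by (metis a le_SucI order_refl relpowp_Suc_I)
  have "(?E^^0) u u" by simp
  then obtain m1 where m1: "m1 \<le> Suc 0" "(?E^^m1) u w1" using step[OF _ assms(1), of 0] by auto
  obtain m2 where m2: "m2 \<le> Suc m1" "(?E^^m2) u w2" using step[OF m1(2) assms(2)] by auto
  obtain m3 where m3: "m3 \<le> Suc m2" "(?E^^m3) u v" using step[OF m2(2) assms(3)] by auto
  have le: "m3 \<le> 3" using m1 m2 m3 by linarith
  have ex: "\<exists>n. (?E^^n) u v" using m3 by blast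
  have "(LEAST n. (?E^^n) u v) \<le> m3" by (rule Least_le) (rule m3(2))
  then have "(LEAST n. (?E^^n) u v) \<le> 3" using le by linarith
  then show ?thesis using ex by (simp add: gdist_def numeral_eq_enat)
qed

lemma unreach:
  assumes A: "cliq2 VG EG A B" and C: "cliq2 VH EH C D"
    and d: "(g \<in> A \<longleftrightarrow> h \<in> C) \<noteq> (g' \<in> A \<longleftrightarrow> h' \<in> C)"
  shows "gdist (modprod_adj VG EG VH EH) (g,h) (g',h') = \<infinity>"
proof -
  let ?E = "modprod_adj VG EG VH EH"
  define inv where "inv p = (fst p \<in> A \<longleftrightarrow> snd p \<in> C)" for p
  have edge: "inv p = inv q" if e: "?E p q" for p q
  proof -
    obtain a b a' b' where pq: "p = (a,b)" "q = (a',b')" by (cases p, cases q) auto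
    from e pq have m: "a \<in> VG" "a' \<in> VG" "b \<in> VH" "b' \<in> VH"
      and c: "(a = a' \<and> EH b b') \<or> (EG a a' \<and> b = b') \<or> (EG a a' \<and> EH b b') \<or>
      (a \<noteq> a' \<and> b \<noteq> b' \<and> \<not> EG a a' \<and> \<not> EH b b')"
      by (auto simp: modprod_adj_def)
    have GA: "EG a a' \<longleftrightarrow> (a \<noteq> a' \<and> ((a \<in> A \<and> a' \<in> A) \<or> (a \<in> B \<and> a' \<in> B)))"
      using A m unfolding cliq2_def by blast
    have HC: "EH b b' \<longleftrightarrow> (b \<noteq> b' \<and> ((b \<in> C \<and> b' \<in> C) \<or> (b \<in> D \<and> b' \<in> D)))"
      using C m unfolding cliq2_def by blast
    have a1: "a \<in> A \<or> a \<in> B" "a' \<in> A \<or> a' \<in> B" "\<not> (a \<in> A \<and> a \<in> B)" "\<not> (a' \<in> A \<and> a' \<in> B)"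
      using A m unfolding cliq2_def by blast+
    have b1: "b \<in> C \<or> b \<in> D" "b' \<in> C \<or> b' \<in> D" "\<not> (b \<in> C \<and> b \<in> D)" "\<not> (b' \<in> C \<and> b' \<in> D)"
      using C m unfolding cliq2_def by blast+
    show ?thesis using c GA HC a1 b1 pq unfolding inv_def by auto
  qed
  have pres: "(?E^^n) p q \<Longrightarrow> inv p = inv q" for n p q
  proof (induction n arbitrary: q)
    case 0 then show ?case by simp
  next
    case (Suc n)
    from Suc.prems obtain y where "(?E^^n) p y" "?E y q" by (rule relpowp_Suc_E)
    then show ?case using Suc.IH edge by metis
  qed
  have "\<not> (?E^^n) (g,h) (g',h')" for n
    using pres[of n "(g,h)" "(g',h')"] d unfolding inv_def by auto
  then show ?thesis by (simp add: gdist_def)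
qed

lemma core:
  assumes sG: "simple_graph VG EG" and sH: "simple_graph VH EH" and nc: "\<not> complete_graph VG EG"
    and gg: "cl VG EG g g'" and hh: "fr VH EH h h'"
  shows "(\<exists>w1 w2. RR VG EG VH EH (g,h) w1 \<and> RR VG EG VH EH w1 w2 \<and> RR VG EG VH EH w2 (g',h'))
     \<or> (\<exists>A B C D. cliq2 VG EG A B \<and> cliq2 VH EH C D \<and> ((g\<in>A \<longleftrightarrow> h\<in>C) \<noteq> (g'\<in>A \<longleftrightarrow> h'\<in>C)))"
proof (rule disj_commute[THEN iffD1], rule disjCI)
  let ?R = "RR VG EG VH EH"
  let ?cG = "cl VG EG" and ?fG = "fr VG EG" and ?cH = "cl VH EH" and ?fH = "fr VH EH"
  assume nW: "\<not> (\<exists>w1 w2. ?R (g,h) w1 \<and> ?R w1 w2 \<and> ?R w2 (g',h'))"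
  have gV: "g \<in> VG" "g' \<in> VG" using cl_mem[OF gg] by auto
  have hV: "h \<in> VH" "h' \<in> VH" using fr_mem[OF hh] by auto
  have cgg: "?cG g g" "?cG g' g'" using gV by (simp_all add: cl_def)
  have chh: "?cH h h" "?cH h' h'" using hV by (simp_all add: cl_def)
  have hh': "?fH h' h" using fr_sym[OF sH hh] .
  have s1: "\<not> (?cG g x \<and> ?fG g' x)" for x
  proof
    assume a: "?cG g x \<and> ?fG g' x"
    have "?R (g,h) (x,h)" using a chh by (auto intro!: RR_I1)
    moreover have "?R (x,h) (g',h')" using a hh fr_sym[OF sG] by (auto intro!: RR_I2)
    moreover have "?R (g',h') (g',h')" using cgg chh by (auto intro!: RR_I1)
    ultimately show False using nW by blast
  qed
  have s2: "\<not> (?fG g x \<and> ?cG g' x)" for x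
  proof
    assume a: "?fG g x \<and> ?cG g' x"
    have "?R (g,h) (x,h')" using a hh by (auto intro!: RR_I2)
    moreover have "?R (x,h') (g',h')" using a chh cl_sym[OF sG] by (auto intro!: RR_I1)
    moreover have "?R (g',h') (g',h')" using cgg chh by (auto intro!: RR_I1)
    ultimately show False using nW by blast
  qed
  have twc: "?cG g' x" if "?cG g x" for x
    using s1[of x] that cl_or_fr[OF gV(2), of x EG] cl_mem[OF that] by blast
  have twf: "?fG g' x" if "?fG g x" for x
    using s2[of x] that cl_or_fr[OF gV(2), of x EG] fr_mem[OF that] by blast
  have i: "\<not> (?cH h y \<and> ?cH y y' \<and> ?cH y' h')" for y y'
  proof
    assume a: "?cH h y \<and> ?cH y y' \<and> ?cH y' h'"
    have "?R (g,h) (g,y)" using a cgg by (auto intro!: RR_I1)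
    moreover have "?R (g,y) (g,y')" using a cgg by (auto intro!: RR_I1)
    moreover have "?R (g,y') (g',h')" using a gg by (auto intro!: RR_I1)
    ultimately show False using nW by blast
  qed
  have i': "\<not> (?cG g p \<and> ?fG p p' \<and> ?cG g p')" for p p'
  proof
    assume a: "?cG g p \<and> ?fG p p' \<and> ?cG g p'"
    have "?R (g,h) (p,h)" using a chh by (auto intro!: RR_I1)
    moreover have "?R (p,h) (p',h')" using a hh by (auto intro!: RR_I2)
    moreover have "?R (p',h') (g',h')" using a chh twc cl_sym[OF sG] by (auto intro!: RR_I1)
    ultimately show False using nW by blast
  qed
  have ii: "\<not> (?fG g q \<and> ?fH h y \<and> ?cH y y' \<and> ?fH y' h')" for q y y'
  proof
    assume a: "?fG g q \<and> ?fH h y \<and> ?cH y y' \<and> ?fH y' h'"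
    have "?R (g,h) (q,y)" using a by (auto intro!: RR_I2)
    moreover have "?R (q,y) (q,y')" using a by (auto intro!: RR_I1 simp: cl_def fr_def)
    moreover have "?R (q,y') (g',h')" using a twf fr_sym[OF sG] by (auto intro!: RR_I2)
    ultimately show False using nW by blast
  qed
  have ii': "\<not> (?fG g q \<and> ?fG q q' \<and> ?fG g q')" for q q'
  proof
    assume a: "?fG g q \<and> ?fG q q' \<and> ?fG g q'"
    have "?R (g,h) (q,h')" using a hh by (auto intro!: RR_I2)
    moreover have "?R (q,h') (q',h)" using a hh' by (auto intro!: RR_I2)
    moreover have "?R (q',h) (g',h')" using a hh twf fr_sym[OF sG] by (auto intro!: RR_I2)
    ultimately show False using nW by blast
  qed
  have iii: "\<not> (?fG g q \<and> ?cH h x \<and> ?fH x y' \<and> ?fH y' h')" for q x y'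
  proof
    assume a: "?fG g q \<and> ?cH h x \<and> ?fH x y' \<and> ?fH y' h'"
    have "?R (g,h) (g,x)" using a cgg by (auto intro!: RR_I1)
    moreover have "?R (g,x) (q,y')" using a by (auto intro!: RR_I2)
    moreover have "?R (q,y') (g',h')" using a twf fr_sym[OF sG] by (auto intro!: RR_I2)
    ultimately show False using nW by blast
  qed
  have iii': "\<not> (?cG g p \<and> ?fG g q \<and> ?cG p q)" for p q
  proof
    assume a: "?cG g p \<and> ?fG g q \<and> ?cG p q"
    have "?R (g,h) (p,h)" using a chh by (auto intro!: RR_I1)
    moreover have "?R (p,h) (q,h)" using a chh by (auto intro!: RR_I1)
    moreover have "?R (q,h) (g',h')" using a hh twf fr_sym[OF sG] by (auto intro!: RR_I2)
    ultimately show False using nW by blast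
  qed
  have iv: "\<not> (?fG g q \<and> ?fH h y \<and> ?fH y x \<and> ?cH x h')" for q y x
  proof
    assume a: "?fG g q \<and> ?fH h y \<and> ?fH y x \<and> ?cH x h'"
    have "?R (g,h) (q,y)" using a by (auto intro!: RR_I2)
    moreover have "?R (q,y) (g',x)" using a twf fr_sym[OF sG] by (auto intro!: RR_I2)
    moreover have "?R (g',x) (g',h')" using a cgg by (auto intro!: RR_I1)
    ultimately show False using nW by blast
  qed
  have "\<exists>q. ?fG g q"
  proof (rule ccontr)
    assume nq: "\<not> (\<exists>q. ?fG g q)"
    from nc obtain a b where ab: "a \<in> VG" "b \<in> VG" "a \<noteq> b" "\<not> EG a b"
      unfolding complete_graph_def by blast
    have "?cG g a" using cl_or_fr[OF gV(1) ab(1), of EG] nq by blast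
    moreover have "?cG g b" using cl_or_fr[OF gV(1) ab(2), of EG] nq by blast
    moreover have "?fG a b" using ab by (simp add: fr_def)
    ultimately show False using i'[of a b] by blast
  qed
  then obtain q where q: "?fG g q" by blast
  define A where "A = {x\<in>VG. ?cG g x}"
  define B where "B = {x\<in>VG. ?fG g x}"
  define C where "C = {y\<in>VH. ?cH h y}"
  define D where "D = {y\<in>VH. ?fH h y}"
  have VGAB: "x \<in> A \<or> x \<in> B" "\<not> (x \<in> A \<and> x \<in> B)" if "x \<in> VG" for x
    using that cl_or_fr[OF gV(1) that, of EG] not_cl_fr[of VG EG g x] unfolding A_def B_def by blast+
  have VHCD: "x \<in> C \<or> x \<in> D" "\<not> (x \<in> C \<and> x \<in> D)" if "x \<in> VH" for x
    using that cl_or_fr[OF hV(1) that, of EH] not_cl_fr[of VH EH h x] unfolding C_def D_def by blast+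
  have GE: "EG x y \<longleftrightarrow> (x \<noteq> y \<and> ((x \<in> A \<and> y \<in> A) \<or> (x \<in> B \<and> y \<in> B)))"
    if xy: "x \<in> VG" "y \<in> VG" for x y
  proof
    assume e: "EG x y"
    have "x \<noteq> y" using e sG by (auto simp: simple_graph_def)
    moreover have "\<not> (x \<in> A \<and> y \<in> B)" using iii'[of x y] E_cl[OF sG e] unfolding A_def B_def by blast
    moreover have "\<not> (x \<in> B \<and> y \<in> A)" using iii'[of y x] cl_sym[OF sG E_cl[OF sG e]] unfolding A_def B_def by blast
    ultimately show "x \<noteq> y \<and> ((x \<in> A \<and> y \<in> A) \<or> (x \<in> B \<and> y \<in> B))" using VGAB[OF xy(1)] VGAB[OF xy(2)] by blast
  next
    assume r: "x \<noteq> y \<and> ((x \<in> A \<and> y \<in> A) \<or> (x \<in> B \<and> y \<in> B))"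
    show "EG x y"
    proof (rule ccontr)
      assume "\<not> EG x y"
      then have f: "?fG x y" using r xy by (simp add: fr_def)
      show False using r f i'[of x y] ii'[of x y] unfolding A_def B_def by blast
    qed
  qed
  have Cfr: "?fH y h'" if "y \<in> C" for y
    using that i[of y y] cl_or_fr[of y VH h' EH] hV cl_refl[of y VH EH] unfolding C_def by blast
  have Dcl: "?cH y h'" if "y \<in> D" for y
    using that ii[of q y y] q cl_or_fr[of y VH h' EH] hV cl_refl[of y VH EH] unfolding D_def by blast
  have HE: "EH x y \<longleftrightarrow> (x \<noteq> y \<and> ((x \<in> C \<and> y \<in> C) \<or> (x \<in> D \<and> y \<in> D)))"
    if xy: "x \<in> VH" "y \<in> VH" for x y
  proof
    assume e: "EH x y"
    have "x \<noteq> y" using e sH by (auto simp: simple_graph_def)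
    moreover have "\<not> (x \<in> C \<and> y \<in> D)" using i[of x y] E_cl[OF sH e] Dcl[of y] unfolding C_def by blast
    moreover have "\<not> (x \<in> D \<and> y \<in> C)" using i[of y x] cl_sym[OF sH E_cl[OF sH e]] Dcl[of x] unfolding C_def by blast
    ultimately show "x \<noteq> y \<and> ((x \<in> C \<and> y \<in> C) \<or> (x \<in> D \<and> y \<in> D))" using VHCD[OF xy(1)] VHCD[OF xy(2)] by blast
  next
    assume r: "x \<noteq> y \<and> ((x \<in> C \<and> y \<in> C) \<or> (x \<in> D \<and> y \<in> D))"
    show "EH x y"
    proof (rule ccontr)
      assume "\<not> EH x y"
      then have f: "?fH x y" using r xy by (simp add: fr_def)
      show False using r f iii[of q x y] iv[of q x y] q Cfr[of y] Dcl[of y] unfolding C_def D_def by blast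
    qed
  qed
  have cA: "cliq2 VG EG A B" unfolding cliq2_def
  proof (intro conjI)
    show "A \<noteq> {}" using gV cgg unfolding A_def by blast
    show "B \<noteq> {}" using q fr_mem[OF q] unfolding B_def by blast
    show "A \<inter> B = {}" unfolding A_def B_def by (auto dest: not_cl_fr)
    show "VG = A \<union> B" unfolding A_def B_def using cl_or_fr[OF gV(1), of _ EG] cl_mem fr_mem by auto
    show "\<forall>x\<in>VG. \<forall>y\<in>VG. EG x y \<longleftrightarrow> (x \<noteq> y \<and> ((x \<in> A \<and> y \<in> A) \<or> (x \<in> B \<and> y \<in> B)))"
      using GE by (intro ballI) simp
  qed
  have cC: "cliq2 VH EH C D" unfolding cliq2_def
  proof (intro conjI)
    show "C \<noteq> {}" using hV chh unfolding C_def by blast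
    show "D \<noteq> {}" using hh hV unfolding D_def by blast
    show "C \<inter> D = {}" unfolding C_def D_def by (auto dest: not_cl_fr)
    show "VH = C \<union> D" unfolding C_def D_def using cl_or_fr[OF hV(1), of _ EH] cl_mem fr_mem by auto
    show "\<forall>x\<in>VH. \<forall>y\<in>VH. EH x y \<longleftrightarrow> (x \<noteq> y \<and> ((x \<in> C \<and> y \<in> C) \<or> (x \<in> D \<and> y \<in> D)))"
      using HE by (intro ballI) simp
  qed
  have "g \<in> A" "g' \<in> A" "h \<in> C" "h' \<notin> C"
    using gV gg cgg hV chh hh not_cl_fr[of VH EH h h'] unfolding A_def C_def by blast+
  then show "\<exists>A B C D. cliq2 VG EG A B \<and> cliq2 VH EH C D \<and> ((g\<in>A \<longleftrightarrow> h\<in>C) \<noteq> (g'\<in>A \<longleftrightarrow> h'\<in>C))"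
    using cA cC by blast
qed

lemma key:
  assumes sG: "simple_graph VG EG" and sH: "simple_graph VH EH"
    and ncG: "\<not> complete_graph VG EG" and ncH: "\<not> complete_graph VH EH"
    and m: "g \<in> VG" "g' \<in> VG" "h \<in> VH" "h' \<in> VH"
  shows "gdist (modprod_adj VG EG VH EH) (g,h) (g',h') \<le> 3 \<or>
    (two_cliques VG EG \<and> two_cliques VH EH \<and> gdist (modprod_adj VG EG VH EH) (g,h) (g',h') = \<infinity>)"
proof -
  let ?R = "RR VG EG VH EH"
  have rr: "?R (g,h) (g,h)" using m by (intro RR_I1) (simp_all add: cl_def)
  consider "cl VG EG g g'" "cl VH EH h h'" | "cl VG EG g g'" "fr VH EH h h'"
    | "fr VG EG g g'" "cl VH EH h h'" | "fr VG EG g g'" "fr VH EH h h'"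
    using cl_or_fr[OF m(1,2), of EG] cl_or_fr[OF m(3,4), of EH] by blast
  then show ?thesis
  proof cases
    case 1
    then show ?thesis using rr walk3[of VG EG VH EH "(g,h)" "(g,h)" "(g,h)" "(g',h')"]
      by (meson RR_I1)
  next
    case 2
    note c = this
    from core[OF sG sH ncG this] show ?thesis
    proof
      assume "\<exists>w1 w2. ?R (g,h) w1 \<and> ?R w1 w2 \<and> ?R w2 (g',h')"
      then obtain w1 w2 where w: "?R (g,h) w1" "?R w1 w2" "?R w2 (g',h')" by blast
      have "gdist (modprod_adj VG EG VH EH) (g,h) (g',h') \<le> 3" by (rule walk3[OF w])
      then show ?thesis by blast
    next
      assume "\<exists>A B C D. cliq2 VG EG A B \<and> cliq2 VH EH C D \<and> ((g\<in>A \<longleftrightarrow> h\<in>C) \<noteq> (g'\<in>A \<longleftrightarrow> h'\<in>C))"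
      then obtain A B C D where c: "cliq2 VG EG A B" "cliq2 VH EH C D"
        "(g\<in>A \<longleftrightarrow> h\<in>C) \<noteq> (g'\<in>A \<longleftrightarrow> h'\<in>C)" by blast
      have "gdist (modprod_adj VG EG VH EH) (g,h) (g',h') = \<infinity>" by (rule unreach[OF c])
      moreover have "two_cliques VG EG" "two_cliques VH EH" using c(1,2) two_cliques_iff by blast+
      ultimately show ?thesis by blast
    qed
  next
    case 3
    from core[OF sH sG ncH 3(2) 3(1)] show ?thesis
    proof
      assume "\<exists>w1 w2. RR VH EH VG EG (h,g) w1 \<and> RR VH EH VG EG w1 w2 \<and> RR VH EH VG EG w2 (h',g')"
      then obtain w1 w2 where w: "RR VH EH VG EG (h,g) w1" "RR VH EH VG EG w1 w2" "RR VH EH VG EG w2 (h',g')" by blast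
      have w': "?R (g,h) (prod.swap w1)" "?R (prod.swap w1) (prod.swap w2)" "?R (prod.swap w2) (g',h')"
        using RR_swap[OF w(1)] RR_swap[OF w(2)] RR_swap[OF w(3)] by simp_all
      have "gdist (modprod_adj VG EG VH EH) (g,h) (g',h') \<le> 3" by (rule walk3[OF w'])
      then show ?thesis by blast
    next
      assume "\<exists>A B C D. cliq2 VH EH A B \<and> cliq2 VG EG C D \<and> ((h\<in>A \<longleftrightarrow> g\<in>C) \<noteq> (h'\<in>A \<longleftrightarrow> g'\<in>C))"
      then obtain A B C D where c: "cliq2 VH EH A B" "cliq2 VG EG C D"
        "(h\<in>A \<longleftrightarrow> g\<in>C) \<noteq> (h'\<in>A \<longleftrightarrow> g'\<in>C)" by blast
      have d: "(g\<in>C \<longleftrightarrow> h\<in>A) \<noteq> (g'\<in>C \<longleftrightarrow> h'\<in>A)" using c(3) by blast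
      have "gdist (modprod_adj VG EG VH EH) (g,h) (g',h') = \<infinity>" by (rule unreach[OF c(2) c(1) d])
      moreover have "two_cliques VG EG" "two_cliques VH EH" using c(1,2) two_cliques_iff by blast+
      ultimately show ?thesis by blast
    qed
  next
    case 4
    then show ?thesis using rr walk3[of VG EG VH EH "(g,h)" "(g,h)" "(g,h)" "(g',h')"]
      by (meson RR_I2)
  qed
qed

theorem mainTheorem3:
  fixes VG :: "'a set" and EG :: "'a \<Rightarrow> 'a \<Rightarrow> bool"
    and VH :: "'b set" and EH :: "'b \<Rightarrow> 'b \<Rightarrow> bool"
  assumes "simple_graph VG EG" and "simple_graph VH EH"
    and "\<not> complete_graph VG EG" and "\<not> complete_graph VH EH"
  shows "(\<forall>u\<in>modprod_verts VG VH. \<forall>v\<in>modprod_verts VG VH.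
            gdist (modprod_adj VG EG VH EH) u v \<le> 3 \<or> gdist (modprod_adj VG EG VH EH) u v = \<infinity>)
       \<and> ((\<exists>u\<in>modprod_verts VG VH. \<exists>v\<in>modprod_verts VG VH.
            gdist (modprod_adj VG EG VH EH) u v = \<infinity>)
          \<longrightarrow> two_cliques VG EG \<and> two_cliques VH EH)"
proof
  have K: "gdist (modprod_adj VG EG VH EH) u v \<le> 3 \<or>
    (two_cliques VG EG \<and> two_cliques VH EH \<and> gdist (modprod_adj VG EG VH EH) u v = \<infinity>)"
    if "u \<in> modprod_verts VG VH" "v \<in> modprod_verts VG VH" for u v
  proof -
    obtain g h g' h' where uv: "u = (g,h)" "v = (g',h')" by (cases u, cases v) auto
    then have "g \<in> VG" "h \<in> VH" "g' \<in> VG" "h' \<in> VH"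
      using that unfolding modprod_verts_def by auto
    note mem = this
    show ?thesis unfolding uv(1,2) by (rule key[OF assms mem(1,3,2,4)])
  qed
  show "\<forall>u\<in>modprod_verts VG VH. \<forall>v\<in>modprod_verts VG VH.
            gdist (modprod_adj VG EG VH EH) u v \<le> 3 \<or> gdist (modprod_adj VG EG VH EH) u v = \<infinity>"
  proof (intro ballI)
    fix u v assume "u \<in> modprod_verts VG VH" "v \<in> modprod_verts VG VH"
    from K[OF this] show "gdist (modprod_adj VG EG VH EH) u v \<le> 3 \<or> gdist (modprod_adj VG EG VH EH) u v = \<infinity>"
      by (elim disjE conjE) simp_all
  qed
  show "(\<exists>u\<in>modprod_verts VG VH. \<exists>v\<in>modprod_verts VG VH.
            gdist (modprod_adj VG EG VH EH) u v = \<infinity>)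
          \<longrightarrow> two_cliques VG EG \<and> two_cliques VH EH"
  proof
    assume "\<exists>u\<in>modprod_verts VG VH. \<exists>v\<in>modprod_verts VG VH.
            gdist (modprod_adj VG EG VH EH) u v = \<infinity>"
    then obtain u v where uv: "u \<in> modprod_verts VG VH" "v \<in> modprod_verts VG VH"
      "gdist (modprod_adj VG EG VH EH) u v = \<infinity>" by blast
    have "\<not> gdist (modprod_adj VG EG VH EH) u v \<le> 3" using uv(3) by simp
    with K[OF uv(1,2)] show "two_cliques VG EG \<and> two_cliques VH EH" by (elim disjE conjE) simp_all
  qed
qed

end
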